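(* Let $(X,\tau_1,\tau_2)$ be a bitopological space, $i,j\in\{1,2\}$, $i\neq j$, which is $(i,j)$-almost regular, $(i,j)$-semiregular and a $j$-$P$-space. Then $X$ is $\tau_i$-paralindelöf with respect to $\tau_j$ if and only if $X$ is $(i,j)_r$-nearly paralindelöf.
   Context: $(X,\tau_1,\tau_2)$ is a bitopological space and $i,j\in\{1,2\}$, $i\neq j$. For $k\in\{1,2\}$, $k\text{-}\mathrm{int}$ and $k\text{-}\mathrm{cl}$ denote interior and closure with respect to $\tau_k$; "$k$-open" means $\tau_k$-open. A set $A$ is $(i,j)$-regular open if $A=i\text{-}\mathrm{int}(j\text{-}\mathrm{cl}(A))$. $X$ is $(i,j)$-semiregular if the $(i,j)$-regular open sets form a base for $\tau_i$. $X$ is $(i,j)$-almost regular if for each $x\in X$ and each $(i,j)$-regular open set $U$ containing $x$ there is an $(i,j)$-regular open set $V$ with $x\in V\subseteq j\text{-}\mathrm{cl}(V)\subseteq U$. A family $\mathcal V$ refines $\mathcal U$ if each member of $\mathcal V$ is contained in some member of $\mathcal U$; a family is a cover of $X$ if its union is $X$. A family is $k$-locally countable if every $x\in X$ has a $k$-open neighbourhood meeting at most countably many of its members. $X$ is a $k$-$P$-space if every intersection of countably many $k$-open sets is $k$-open. $X$ is $\tau_i$-paralindelöf with respect to $\tau_j$ if every cover of $X$ by $i$-open sets has a refinement which is a cover of $X$ by $i$-open sets and is $j$-locally countable. $X$ is $(i,j)_r$-nearly paralindelöf if every cover $\{U_\alpha:\alpha\in\Delta\}$ of $X$ by $(i,j)$-regular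 open sets has a $j$-locally countable cover $\{V_\beta:\beta\in B\}$ of $X$ by $(i,j)$-regular open sets such that for each $\beta\in B$ there is $\alpha(\beta)\in\Delta$ with $j\text{-}\mathrm{cl}(V_\beta)\subseteq U_{\alpha(\beta)}$. *)

theory Defs
  imports "HOL-Analysis.Analysis"
begin

text \<open>A bitopological space is a pair of topologies Ti, Tj on the same carrier.
  The pair (i,j) is represented by the ordered pair of topologies (Ti, Tj).\<close>

definition bitop :: "'a topology \<Rightarrow> 'a topology \<Rightarrow> bool" where
  "bitop Ti Tj \<longleftrightarrow> topspace Ti = topspace Tj"

definition ij_regular_open :: "'a topology \<Rightarrow> 'a topology \<Rightarrow> 'a set \<Rightarrow> bool" where
  "ij_regular_open Ti Tj A \<longleftrightarrow> A = Ti interior_of (Tj closure_of A)"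

definition ij_semiregular :: "'a topology \<Rightarrow> 'a topology \<Rightarrow> bool" where
  "ij_semiregular Ti Tj \<longleftrightarrow>
     (\<forall>U x. openin Ti U \<and> x \<in> U \<longrightarrow>
        (\<exists>V. ij_regular_open Ti Tj V \<and> x \<in> V \<and> V \<subseteq> U)) \<and>
     (\<forall>V. ij_regular_open Ti Tj V \<longrightarrow> openin Ti V)"

definition ij_almost_regular :: "'a topology \<Rightarrow> 'a topology \<Rightarrow> bool" where
  "ij_almost_regular Ti Tj \<longleftrightarrow>
     (\<forall>x U. x \<in> topspace Ti \<and> ij_regular_open Ti Tj U \<and> x \<in> U \<longrightarrow>
        (\<exists>V. ij_regular_open Ti Tj V \<and> x \<in> V \<and> V \<subseteq> Tj closure_of V
             \<and> Tj closure_of V \<subseteq> U))"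

definition refines :: "'a set set \<Rightarrow> 'a set set \<Rightarrow> bool" where
  "refines \<V> \<U> \<longleftrightarrow> (\<forall>V\<in>\<V>. \<exists>U\<in>\<U>. V \<subseteq> U)"

definition is_cover :: "'a topology \<Rightarrow> 'a set set \<Rightarrow> bool" where
  "is_cover T \<U> \<longleftrightarrow> \<Union>\<U> = topspace T"

definition locally_countable :: "'a topology \<Rightarrow> 'a set set \<Rightarrow> bool" where
  "locally_countable T \<U> \<longleftrightarrow>
     (\<forall>x\<in>topspace T. \<exists>W. openin T W \<and> x \<in> W \<and> countable {U\<in>\<U>. U \<inter> W \<noteq> {}})"

definition P_space :: "'a topology \<Rightarrow> bool" where
  "P_space T \<longleftrightarrow>
     (\<forall>\<F>. countable \<F> \<and> \<F> \<noteq> {} \<and> (\<forall>U\<in>\<F>. openin T U) \<longrightarrow> openin T (\<Inter>\<F>))"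

definition paralindelof_wrt :: "'a topology \<Rightarrow> 'a topology \<Rightarrow> bool" where
  "paralindelof_wrt Ti Tj \<longleftrightarrow>
     (\<forall>\<U>. is_cover Ti \<U> \<and> (\<forall>U\<in>\<U>. openin Ti U) \<longrightarrow>
        (\<exists>\<V>. refines \<V> \<U> \<and> is_cover Ti \<V> \<and> (\<forall>V\<in>\<V>. openin Ti V)
             \<and> locally_countable Tj \<V>))"

definition nearly_paralindelof_r :: "'a topology \<Rightarrow> 'a topology \<Rightarrow> bool" where
  "nearly_paralindelof_r Ti Tj \<longleftrightarrow>
     (\<forall>\<U>. is_cover Ti \<U> \<and> (\<forall>U\<in>\<U>. ij_regular_open Ti Tj U) \<longrightarrow>
        (\<exists>\<V>. is_cover Ti \<V> \<and> (\<forall>V\<in>\<V>. ij_regular_open Ti Tj V)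
             \<and> locally_countable Tj \<V>
             \<and> (\<forall>V\<in>\<V>. \<exists>U\<in>\<U>. Tj closure_of V \<subseteq> U)))"

end

theory Submission
  imports Defs
begin

lemma R_reg:
  assumes "openin Ti W" "topspace Ti = topspace Tj"
  shows "ij_regular_open Ti Tj (Ti interior_of (Tj closure_of W))"
proof -
  let ?R = "Ti interior_of (Tj closure_of W)"
  have W: "W \<subseteq> topspace Tj" using openin_subset[OF assms(1)] assms(2) by simp
  have "W \<subseteq> ?R" by (rule interior_of_maximal[OF closure_of_subset[OF W] assms(1)])
  hence "Tj closure_of W \<subseteq> Tj closure_of ?R" by (rule closure_of_mono)
  hence 1: "?R \<subseteq> Ti interior_of (Tj closure_of ?R)" by (rule interior_of_mono)
  have "Tj closure_of ?R \<subseteq> Tj closure_of W"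
    using closure_of_mono[OF interior_of_subset, of Tj Ti "Tj closure_of W"] by simp
  hence 2: "Ti interior_of (Tj closure_of ?R) \<subseteq> ?R" by (rule interior_of_mono)
  show ?thesis unfolding ij_regular_open_def using 1 2 by blast
qed

lemma reg_sub: "ij_regular_open Ti Tj V \<Longrightarrow> V \<subseteq> topspace Ti"
  unfolding ij_regular_open_def by (metis interior_of_subset_topspace)

theorem mainTheorem10:
  fixes Ti Tj :: "'a topology"
  assumes "bitop Ti Tj"
    and "ij_almost_regular Ti Tj"
    and "ij_semiregular Ti Tj"
    and "P_space Tj"
  shows "paralindelof_wrt Ti Tj \<longleftrightarrow> nearly_paralindelof_r Ti Tj"
proof
  have top: "topspace Ti = topspace Tj" using assms(1) by (simp add: bitop_def)
  have semi1: "\<And>U x. openin Ti U \<Longrightarrow> x \<in> U \<Longrightarrow> \<exists>V. ij_regular_open Ti Tj V \<and> x \<in> V \<and> V \<subseteq> U"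
    using assms(3) unfolding ij_semiregular_def by blast
  have semi2: "\<And>V. ij_regular_open Ti Tj V \<Longrightarrow> openin Ti V"
    using assms(3) unfolding ij_semiregular_def by blast
  {
    assume P: "paralindelof_wrt Ti Tj"
    show "nearly_paralindelof_r Ti Tj"
      unfolding nearly_paralindelof_r_def
    proof (intro allI impI)
      fix \<U> assume H: "is_cover Ti \<U> \<and> (\<forall>U\<in>\<U>. ij_regular_open Ti Tj U)"
      define \<V> where "\<V> = {V. ij_regular_open Ti Tj V \<and> (\<exists>U\<in>\<U>. Tj closure_of V \<subseteq> U)}"
      have cov: "is_cover Ti \<V>"
        unfolding is_cover_def
      proof
        show "\<Union>\<V> \<subseteq> topspace Ti" unfolding \<V>_def using reg_sub by blast
        show "topspace Ti \<subseteq> \<Union>\<V>"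
        proof
          fix x assume x: "x \<in> topspace Ti"
          obtain U where U: "U \<in> \<U>" "x \<in> U" using H x unfolding is_cover_def by auto
          have Ur: "ij_regular_open Ti Tj U" using H U(1) by blast
          obtain V where "ij_regular_open Ti Tj V \<and> x \<in> V \<and> V \<subseteq> Tj closure_of V
             \<and> Tj closure_of V \<subseteq> U"
            using assms(2)[unfolded ij_almost_regular_def, rule_format, OF conjI[OF x conjI[OF Ur U(2)]]] by blast
          thus "x \<in> \<Union>\<V>" unfolding \<V>_def using U by blast
        qed
      qed
      have op: "\<forall>V\<in>\<V>. openin Ti V" unfolding \<V>_def using semi2 by blast
      obtain \<W> where W: "refines \<W> \<V>" "is_cover Ti \<W>" "\<forall>W\<in>\<W>. openin Ti W"
        "locally_countable Tj \<W>"
        using P[unfolded paralindelof_wrt_def, rule_format, OF conjI[OF cov op]] by blast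
      define R where "R = (\<lambda>W. Ti interior_of (Tj closure_of W))"
      show "\<exists>\<N>. is_cover Ti \<N> \<and> (\<forall>V\<in>\<N>. ij_regular_open Ti Tj V)
             \<and> locally_countable Tj \<N>
             \<and> (\<forall>V\<in>\<N>. \<exists>U\<in>\<U>. Tj closure_of V \<subseteq> U)"
      proof (intro exI[of _ "R ` \<W>"] conjI)
        have sub: "\<And>W. W \<in> \<W> \<Longrightarrow> W \<subseteq> R W"
          unfolding R_def
        proof -
          fix W assume "W \<in> \<W>"
          hence o: "openin Ti W" using W(3) by blast
          hence "W \<subseteq> topspace Tj" using openin_subset[OF o] top by simp
          thus "W \<subseteq> Ti interior_of (Tj closure_of W)"
            by (rule interior_of_maximal[OF closure_of_subset o])
        qed
        show "is_cover Ti (R ` \<W>)"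
          unfolding is_cover_def
        proof
          show "\<Union> (R ` \<W>) \<subseteq> topspace Ti" unfolding R_def
            by (simp add: UN_least interior_of_subset_topspace)
          show "topspace Ti \<subseteq> \<Union> (R ` \<W>)" using W(2) sub unfolding is_cover_def by blast
        qed
        show "\<forall>V\<in>R ` \<W>. ij_regular_open Ti Tj V"
          unfolding R_def using R_reg W(3) top by blast
        show "locally_countable Tj (R ` \<W>)"
          unfolding locally_countable_def
        proof
          fix x assume "x \<in> topspace Tj"
          then obtain G where G: "openin Tj G" "x \<in> G" "countable {U\<in>\<W>. U \<inter> G \<noteq> {}}"
            using W(4) unfolding locally_countable_def by blast
          have "{U\<in>R ` \<W>. U \<inter> G \<noteq> {}} \<subseteq> R ` {U\<in>\<W>. U \<inter> G \<noteq> {}}"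
          proof
            fix U assume "U \<in> {U\<in>R ` \<W>. U \<inter> G \<noteq> {}}"
            then obtain W0 where W0: "W0 \<in> \<W>" "U = R W0" "R W0 \<inter> G \<noteq> {}" by blast
            have "R W0 \<subseteq> Tj closure_of W0" unfolding R_def by (rule interior_of_subset)
            hence "G \<inter> Tj closure_of W0 \<noteq> {}" using W0 by blast
            hence "G \<inter> W0 \<noteq> {}" using openin_Int_closure_of_eq_empty[OF G(1)] by blast
            thus "U \<in> R ` {U\<in>\<W>. U \<inter> G \<noteq> {}}" using W0 by blast
          qed
          hence "countable {U\<in>R ` \<W>. U \<inter> G \<noteq> {}}"
            by (rule countable_subset[OF _ countable_image[OF G(3)]])
          thus "\<exists>W. openin Tj W \<and> x \<in> W \<and> countable {U\<in>R ` \<W>. U \<inter> W \<noteq> {}}"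
            using G by blast
        qed
        show "\<forall>V\<in>R ` \<W>. \<exists>U\<in>\<U>. Tj closure_of V \<subseteq> U"
        proof
          fix V assume "V \<in> R ` \<W>"
          then obtain W0 where W0: "W0 \<in> \<W>" "V = R W0" by blast
          then obtain V0 where V0: "V0 \<in> \<V>" "W0 \<subseteq> V0" using W(1) unfolding refines_def by blast
          then obtain U where U: "U \<in> \<U>" "Tj closure_of V0 \<subseteq> U" unfolding \<V>_def by blast
          have "Tj closure_of V \<subseteq> Tj closure_of W0"
            unfolding W0(2) R_def using closure_of_mono[OF interior_of_subset, of Tj Ti "Tj closure_of W0"] by simp
          also have "\<dots> \<subseteq> Tj closure_of V0" using V0 closure_of_mono by blast
          finally show "\<exists>U\<in>\<U>. Tj closure_of V \<subseteq> U" using U by blast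
        qed
      qed
    qed
  }
  {
    assume N: "nearly_paralindelof_r Ti Tj"
    show "paralindelof_wrt Ti Tj"
      unfolding paralindelof_wrt_def
    proof (intro allI impI)
      fix \<U> assume H: "is_cover Ti \<U> \<and> (\<forall>U\<in>\<U>. openin Ti U)"
      define \<V> where "\<V> = {V. ij_regular_open Ti Tj V \<and> (\<exists>U\<in>\<U>. V \<subseteq> U)}"
      have cov: "is_cover Ti \<V>"
        unfolding is_cover_def
      proof
        show "\<Union>\<V> \<subseteq> topspace Ti" unfolding \<V>_def using reg_sub by blast
        show "topspace Ti \<subseteq> \<Union>\<V>"
        proof
          fix x assume x: "x \<in> topspace Ti"
          obtain U where U: "U \<in> \<U>" "x \<in> U" using H x unfolding is_cover_def by auto
          have Uo: "openin Ti U" using H U(1) by blast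
          obtain V where "ij_regular_open Ti Tj V \<and> x \<in> V \<and> V \<subseteq> U"
            using semi1[OF Uo U(2)] by blast
          thus "x \<in> \<Union>\<V>" unfolding \<V>_def using U by blast
        qed
      qed
      have op: "\<forall>V\<in>\<V>. ij_regular_open Ti Tj V" unfolding \<V>_def by blast
      obtain \<W> where W: "is_cover Ti \<W>" "\<forall>V\<in>\<W>. ij_regular_open Ti Tj V"
             "locally_countable Tj \<W>" "\<forall>V\<in>\<W>. \<exists>U\<in>\<V>. Tj closure_of V \<subseteq> U"
        using N[unfolded nearly_paralindelof_r_def, rule_format, OF conjI[OF cov op]] by blast
      show "\<exists>\<N>. refines \<N> \<U> \<and> is_cover Ti \<N> \<and> (\<forall>V\<in>\<N>. openin Ti V)
             \<and> locally_countable Tj \<N>"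
      proof (intro exI[of _ \<W>] conjI)
        show "refines \<W> \<U>" unfolding refines_def
        proof
          fix V assume V: "V \<in> \<W>"
          then obtain U where U: "U \<in> \<V>" "Tj closure_of V \<subseteq> U" using W(4) by blast
          have "V \<subseteq> Tj closure_of V"
          proof (rule closure_of_subset)
            show "V \<subseteq> topspace Tj" using reg_sub[of Ti Tj V] V W(2) top by simp
          qed
          thus "\<exists>U\<in>\<U>. V \<subseteq> U" using U unfolding \<V>_def by blast
        qed
        show "\<forall>V\<in>\<W>. openin Ti V" using W(2) semi2 by blast
        show "is_cover Ti \<W>" by (rule W(1))
        show "locally_countable Tj \<W>" by (rule W(3))
      qed
    qed
  }
qed

end
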